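(* For every integer $k>2$, $\mathcal{U}_k^m(\mathfrak{N})=\mathbb{N}_{\ge 2}$.
   Context: $\mathbb{N}$ denotes the non-negative integers and $\mathbb{N}_{\ge2}$ the set of integers greater than one. A numerical semigroup is a submonoid of $(\mathbb{N},+)$ with finite complement; $\mathfrak{N}$ denotes the set of all numerical semigroups (a monoid under intersection). A numerical semigroup is irreducible if it cannot be written as the intersection of two numerical semigroups properly containing it. Given a numerical semigroup $S$ and irreducible numerical semigroups $S_1,\dots,S_n$, the expression $S_1\cap\dots\cap S_n$ is a factorization of $S$ (of length $n$) if $S=S_1\cap\dots\cap S_n$ and $S\neq\bigcap_{j\in J}S_j$ for every nonempty proper subset $J\subsetneq\{1,\dots,n\}$. For a positive integer $k$, $\mathcal{U}_k^m(\mathfrak{N})$ is the set of positive integers $l$ such that there exists a numerical semigroup having a factorization of length $k$ and a factorization of length $l$. *)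

theory Defs
  imports Main
begin

definition numerical_semigroup :: "nat set \<Rightarrow> bool" where
  "numerical_semigroup S \<longleftrightarrow> 0 \<in> S \<and> (\<forall>x\<in>S. \<forall>y\<in>S. x + y \<in> S) \<and> finite (UNIV - S)"

definition irreducible_ns :: "nat set \<Rightarrow> bool" where
  "irreducible_ns S \<longleftrightarrow> numerical_semigroup S \<and>
     \<not> (\<exists>T1 T2. numerical_semigroup T1 \<and> numerical_semigroup T2 \<and>
                 S \<subset> T1 \<and> S \<subset> T2 \<and> S = T1 \<inter> T2)"

definition is_factorization :: "nat set \<Rightarrow> (nat \<Rightarrow> nat set) \<Rightarrow> nat \<Rightarrow> bool" where
  "is_factorization S F n \<longleftrightarrow> 0 < n \<and> (\<forall>i<n. irreducible_ns (F i)) \<and>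
     S = (\<Inter>i\<in>{..<n}. F i) \<and>
     (\<forall>J. J \<noteq> {} \<and> J \<subset> {..<n} \<longrightarrow> S \<noteq> (\<Inter>j\<in>J. F j))"

definition has_factorization_of_length :: "nat set \<Rightarrow> nat \<Rightarrow> bool" where
  "has_factorization_of_length S n \<longleftrightarrow> (\<exists>F. is_factorization S F n)"

definition U_m :: "nat \<Rightarrow> nat set" where
  "U_m k = {l. 0 < l \<and> (\<exists>S. numerical_semigroup S \<and>
        has_factorization_of_length S k \<and> has_factorization_of_length S l)}"

end

theory Submission
  imports Defs
begin

lemma irr_crit:
  assumes ns: "numerical_semigroup S" and fS: "f \<notin> S"
    and crit: "\<forall>g. g \<notin> S \<longrightarrow> g \<noteq> f \<longrightarrow> (g < f \<and> f - g \<in> S) \<or> 2*g = f"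
  shows "irreducible_ns S"
proof -
  have key: "f \<in> T" if nT: "numerical_semigroup T" and sT: "S \<subset> T" for T
  proof -
    obtain g where g: "g \<in> T" "g \<notin> S" using sT by blast
    have cl: "\<forall>x\<in>T. \<forall>y\<in>T. x + y \<in> T" using nT unfolding numerical_semigroup_def by blast
    show ?thesis
    proof (cases "g = f")
      case True then show ?thesis using g by simp
    next
      case False
      then have "(g < f \<and> f - g \<in> S) \<or> 2*g = f" using crit g by blast
      then show ?thesis
      proof
        assume h: "g < f \<and> f - g \<in> S"
        then have "f - g \<in> T" using sT by blast
        then have "(f - g) + g \<in> T" using cl g by blast
        then show ?thesis using h by simp
      next
        assume h: "2*g = f"
        have "g + g \<in> T" using cl g by blast
        then show ?thesis using h by (simp add: mult_2)
      qed
    qed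
  qed
  show ?thesis unfolding irreducible_ns_def
    using ns fS key by blast
qed

definition Uf :: "nat \<Rightarrow> nat set" where
  "Uf f = {x. x = 0 \<or> (f div 2 < x \<and> x \<noteq> f)}"

lemma Uf_irr: assumes "f \<ge> 1" shows "irreducible_ns (Uf f)"
proof (rule irr_crit[where f = f])
  show "numerical_semigroup (Uf f)"
    unfolding numerical_semigroup_def
  proof (intro conjI ballI)
    show "0 \<in> Uf f" by (simp add: Uf_def)
  next
    fix x y assume "x \<in> Uf f" "y \<in> Uf f"
    then show "x + y \<in> Uf f" unfolding Uf_def by auto
  next
    have "UNIV - Uf f \<subseteq> {..f}" unfolding Uf_def by auto
    then show "finite (UNIV - Uf f)" using finite_subset by blast
  qed
  show "f \<notin> Uf f" using assms by (simp add: Uf_def)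
  show "\<forall>g. g \<notin> Uf f \<longrightarrow> g \<noteq> f \<longrightarrow> (g < f \<and> f - g \<in> Uf f) \<or> 2*g = f"
    unfolding Uf_def by auto
qed

definition Tj :: "nat \<Rightarrow> nat \<Rightarrow> nat set" where
  "Tj p j = {x. x = 0 \<or> (2*p < x \<and> x \<le> 2*p+j) \<or>
      (3*p \<le> x \<and> x \<le> 6*p-2 \<and> \<not>(2*p < 6*p-1-x \<and> 6*p-1-x \<le> 2*p+j)) \<or> 6*p \<le> x}"

lemma Tj_ns: assumes "j < p" shows "numerical_semigroup (Tj p j)"
  unfolding numerical_semigroup_def
proof (intro conjI ballI)
  show "0 \<in> Tj p j" by (simp add: Tj_def)
next
  fix x y assume "x \<in> Tj p j" "y \<in> Tj p j"
  then show "x + y \<in> Tj p j" using assms unfolding Tj_def by auto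
next
  have "UNIV - Tj p j \<subseteq> {..6*p}" unfolding Tj_def by auto
  then show "finite (UNIV - Tj p j)" using finite_subset by blast
qed

lemma Tj_irr: assumes "j < p" shows "irreducible_ns (Tj p j)"
proof (rule irr_crit[where f = "6*p-1"])
  show "numerical_semigroup (Tj p j)" using Tj_ns assms .
  show "6*p-1 \<notin> Tj p j" using assms unfolding Tj_def by auto
  show "\<forall>g. g \<notin> Tj p j \<longrightarrow> g \<noteq> 6*p-1 \<longrightarrow> (g < 6*p-1 \<and> 6*p-1 - g \<in> Tj p j) \<or> 2*g = 6*p-1"
    using assms unfolding Tj_def by auto
qed

definition Ffac :: "nat \<Rightarrow> nat \<Rightarrow> nat \<Rightarrow> nat set" where
  "Ffac p j i = (if i = 0 then Tj p 0 else if i = 1 then Tj p j else Uf (4*p-j-i))"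

definition Sdef :: "nat \<Rightarrow> nat set" where
  "Sdef p = {x. x = 0 \<or> (4*p-1 \<le> x \<and> x \<le> 6*p-2) \<or> 6*p \<le> x}"

lemma Sdef_ns: "numerical_semigroup (Sdef p)"
  unfolding numerical_semigroup_def
proof (intro conjI ballI)
  show "0 \<in> Sdef p" by (simp add: Sdef_def)
next
  fix x y assume "x \<in> Sdef p" "y \<in> Sdef p"
  then show "x + y \<in> Sdef p" unfolding Sdef_def by auto
next
  have "UNIV - Sdef p \<subseteq> {..6*p}" unfolding Sdef_def by auto
  then show "finite (UNIV - Sdef p)" using finite_subset by blast
qed

lemma Ffac_inter:
  assumes "1 \<le> j" "j < p"
  shows "Sdef p = (\<Inter>i\<in>{..<p+1-j}. Ffac p j i)"
proof (intro set_eqI iffI)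
  fix x assume x: "x \<in> Sdef p"
  show "x \<in> (\<Inter>i\<in>{..<p+1-j}. Ffac p j i)"
  proof (intro INT_I)
    fix i assume i: "i \<in> {..<p+1-j}"
    show "x \<in> Ffac p j i"
    proof (cases "i = 0")
      case True then show ?thesis using x assms unfolding Ffac_def Tj_def Sdef_def by auto
    next
      case False
      show ?thesis
      proof (cases "i = 1")
        case True then show ?thesis using x assms unfolding Ffac_def Tj_def Sdef_def by auto
      next
        case False
        then show ?thesis using \<open>i \<noteq> 0\<close> x assms i unfolding Ffac_def Uf_def Sdef_def by auto
      qed
    qed
  qed
next
  fix x assume x: "x \<in> (\<Inter>i\<in>{..<p+1-j}. Ffac p j i)"
  show "x \<in> Sdef p"
  proof (rule ccontr)
    assume nx: "x \<notin> Sdef p"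
    have "x \<in> Ffac p j 0" using x assms by auto
    then have r: "3*p \<le> x \<and> x \<le> 4*p-2" using nx unfolding Ffac_def Tj_def Sdef_def by auto
    show False
    proof (cases "6*p-1-x \<le> 2*p+j")
      case True
      have "x \<in> Ffac p j 1" using x assms by auto
      then show False using True r assms unfolding Ffac_def Tj_def by auto
    next
      case False
      define i where "i = 4*p-j-x"
      have i1: "2 \<le> i" "i < p+1-j" using False r assms unfolding i_def by auto
      have "x \<in> Ffac p j i" using x i1 by auto
      moreover have "4*p-j-i = x" using False r assms unfolding i_def by auto
      ultimately show False using i1 r assms unfolding Ffac_def Uf_def by auto
    qed
  qed
qed

lemma fact_by_witness:
  assumes "0 < n" "\<forall>i<n. irreducible_ns (F i)" "S = (\<Inter>i\<in>{..<n}. F i)"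
    and w: "\<forall>i<n. \<exists>w. w \<notin> F i \<and> (\<forall>j<n. j \<noteq> i \<longrightarrow> w \<in> F j)"
  shows "is_factorization S F n"
  unfolding is_factorization_def
proof (intro conjI allI impI)
  fix J assume J: "J \<noteq> {} \<and> J \<subset> {..<n}"
  then obtain i where i: "i < n" "i \<notin> J" by blast
  obtain v where v: "v \<notin> F i" "\<forall>j<n. j \<noteq> i \<longrightarrow> v \<in> F j" using w i by blast
  have "v \<in> (\<Inter>j\<in>J. F j)" using v J i by auto
  moreover have "v \<notin> S" using assms(3) v i by auto
  ultimately show "S \<noteq> (\<Inter>j\<in>J. F j)" by blast
qed (use assms in auto)

lemma Sdef_fact:
  assumes "2 \<le> L" "L \<le> p"
  shows "has_factorization_of_length (Sdef p) L"
proof -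
  define j where "j = p + 1 - L"
  have j: "1 \<le> j" "j < p" "L = p + 1 - j" using assms unfolding j_def by auto
  have "is_factorization (Sdef p) (Ffac p j) L"
  proof (rule fact_by_witness)
    show "0 < L" using assms by simp
    show "\<forall>i<L. irreducible_ns (Ffac p j i)"
    proof (intro allI impI)
      fix i assume i: "i < L"
      show "irreducible_ns (Ffac p j i)"
      proof (cases "i = 0 \<or> i = 1")
        case True then show ?thesis using j Tj_irr unfolding Ffac_def by auto
      next
        case False
        have "1 \<le> 4*p-j-i" using i j by auto
        then show ?thesis using False Uf_irr unfolding Ffac_def by auto
      qed
    qed
    show "Sdef p = (\<Inter>i\<in>{..<L}. Ffac p j i)" using Ffac_inter[OF j(1,2)] j(3) by simp
    show "\<forall>i<L. \<exists>w. w \<notin> Ffac p j i \<and> (\<forall>ja<L. ja \<noteq> i \<longrightarrow> w \<in> Ffac p j ja)"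
    proof (intro allI impI)
      fix i assume i: "i < L"
      show "\<exists>w. w \<notin> Ffac p j i \<and> (\<forall>ja<L. ja \<noteq> i \<longrightarrow> w \<in> Ffac p j ja)"
      proof (cases "i = 0")
        case True
        show ?thesis
          by (rule exI[where x = "2*p+1"]) (use True i j in \<open>auto simp: Ffac_def Tj_def Uf_def\<close>)
      next
        case False
        show ?thesis
        proof (cases "i = 1")
          case True
          show ?thesis
            by (rule exI[where x = "4*p-2"]) (use True i j in \<open>auto simp: Ffac_def Tj_def Uf_def\<close>)
        next
          case False
          show ?thesis
            by (rule exI[where x = "4*p-j-i"]) (use False \<open>i \<noteq> 0\<close> i j in \<open>auto simp: Ffac_def Tj_def Uf_def\<close>)
        qed
      qed
    qed
  qed
  then show ?thesis unfolding has_factorization_of_length_def by blast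
qed

lemma ns_Inter:
  assumes "finite I" "I \<noteq> {}" "\<forall>i\<in>I. numerical_semigroup (F i)"
  shows "numerical_semigroup (\<Inter>i\<in>I. F i)"
  unfolding numerical_semigroup_def
proof (intro conjI ballI)
  show "0 \<in> (\<Inter>i\<in>I. F i)" using assms(3) unfolding numerical_semigroup_def by auto
next
  fix x y assume "x \<in> (\<Inter>i\<in>I. F i)" "y \<in> (\<Inter>i\<in>I. F i)"
  then show "x + y \<in> (\<Inter>i\<in>I. F i)" using assms(3) unfolding numerical_semigroup_def by auto
next
  have eq: "UNIV - (\<Inter>i\<in>I. F i) = (\<Union>i\<in>I. UNIV - F i)" by auto
  have fi: "\<forall>i\<in>I. finite (UNIV - F i)" using assms(3) unfolding numerical_semigroup_def by blast
  have fin: "finite (\<Union>i\<in>I. UNIV - F i)"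
    using fi by (intro finite_UN_I[OF assms(1)]) blast
  show "finite (UNIV - (\<Inter>i\<in>I. F i))" by (subst eq) (rule fin)
qed

lemma irr_ns: "irreducible_ns S \<Longrightarrow> numerical_semigroup S"
  unfolding irreducible_ns_def by blast

lemma irr_no: "irreducible_ns S \<Longrightarrow> numerical_semigroup T1 \<Longrightarrow> numerical_semigroup T2 \<Longrightarrow>
   S \<subset> T1 \<Longrightarrow> S \<subset> T2 \<Longrightarrow> S = T1 \<inter> T2 \<Longrightarrow> False"
  unfolding irreducible_ns_def by blast

lemma fact_not_irr:
  assumes f: "is_factorization S F n" and n: "2 \<le> n"
  shows "\<not> irreducible_ns S"
proof
  assume irr: "irreducible_ns S"
  have irrF: "\<forall>i<n. irreducible_ns (F i)" using f unfolding is_factorization_def by blast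
  have ns: "\<forall>i<n. numerical_semigroup (F i)" using irrF irr_ns by blast
  define T1 where "T1 = F 0"
  define T2 where "T2 = (\<Inter>i\<in>{1..<n}. F i)"
  have S: "S = (\<Inter>i\<in>{..<n}. F i)" using f unfolding is_factorization_def by blast
  have min: "\<forall>J. J \<noteq> {} \<and> J \<subset> {..<n} \<longrightarrow> S \<noteq> (\<Inter>j\<in>J. F j)"
    using f unfolding is_factorization_def by blast
  have split: "{..<n} = insert 0 {1..<n}" using n by auto
  have eq: "S = T1 \<inter> T2" unfolding S T1_def T2_def split by (simp only: INT_insert)
  have n1: "numerical_semigroup T1" using ns n unfolding T1_def by simp
  have n2: "numerical_semigroup T2" unfolding T2_def
  proof (rule ns_Inter)
    show "finite {1..<n}" by (rule finite_atLeastLessThan)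
    show "{1..<n} \<noteq> {}" using n by simp
    show "\<forall>i\<in>{1..<n}. numerical_semigroup (F i)" using ns by simp
  qed
  have "{0} \<subseteq> {..<n}" using n by simp
  moreover have "(1::nat) \<in> {..<n}" "(1::nat) \<notin> {0}" using n by simp_all
  ultimately have "{0} \<noteq> {} \<and> {0} \<subset> {..<n}" by blast
  then have "S \<noteq> (\<Inter>j\<in>{0}. F j)" by (rule min[rule_format])
  then have s1: "S \<subset> T1" using eq unfolding T1_def by auto
  have "{1..<n} \<subseteq> {..<n}" by auto
  moreover have "(0::nat) \<in> {..<n}" "(0::nat) \<notin> {1..<n}" "(1::nat) \<in> {1..<n}" using n by simp_all
  ultimately have "{1..<n} \<noteq> {} \<and> {1..<n} \<subset> {..<n}" by blast
  then have "S \<noteq> (\<Inter>j\<in>{1..<n}. F j)" by (rule min[rule_format])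
  then have s2: "S \<subset> T2" using eq unfolding T2_def by blast
  show False using irr_no[OF irr n1 n2 s1 s2 eq] .
qed

theorem theorem2p5:
  fixes k :: nat
  assumes "k > 2"
  shows "U_m k = {l. l \<ge> 2}"
proof (intro set_eqI iffI)
  fix l assume "l \<in> U_m k"
  then obtain S where l0: "0 < l" and S: "has_factorization_of_length S k" "has_factorization_of_length S l"
    unfolding U_m_def by auto
  obtain F where F: "is_factorization S F k" using S(1) unfolding has_factorization_of_length_def by auto
  obtain G where G: "is_factorization S G l" using S(2) unfolding has_factorization_of_length_def by auto
  have "l \<noteq> 1"
  proof
    assume "l = 1"
    then have "S = (\<Inter>i\<in>{..<1}. G i)" "irreducible_ns (G 0)" using G unfolding is_factorization_def by blast+
    then have "S = G 0" "irreducible_ns (G 0)" by (simp_all add: lessThan_Suc)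
    then show False using fact_not_irr[OF F] assms by auto
  qed
  then show "l \<in> {l. l \<ge> 2}" using l0 by auto
next
  fix l :: nat assume l: "l \<in> {l. l \<ge> 2}"
  define p where "p = max k l"
  have "has_factorization_of_length (Sdef p) k" using assms unfolding p_def by (intro Sdef_fact) auto
  moreover have "has_factorization_of_length (Sdef p) l" using l unfolding p_def by (intro Sdef_fact) auto
  ultimately show "l \<in> U_m k" using l Sdef_ns unfolding U_m_def by auto
qed

end
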